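(* Let $\alpha>1$ and $n\ge1$. For $k\in[n]$ let $X_{k,n}$ be the $k$-th order statistic of $n$ i.i.d. random variables from the Pareto distribution $\mathcal{P}_\alpha$, and $Y_{k,n}$ the $k$-th order statistic of $n$ i.i.d. random variables from the Fréchet distribution $\mathcal{F}_\alpha$. Then $\mathbb{E}[Y_{k,n}]\le\mathbb{E}[X_{k,n}]+1$.
   Context: Pareto $\mathcal{P}_\alpha$: CDF $1-x^{-\alpha}$ for $x\ge1$; Fréchet $\mathcal{F}_\alpha$: CDF $e^{-1/x^\alpha}$ for $x\ge0$. The $k$-th order statistic is the $k$-th smallest value (same convention for both samples). *)

theory Defs
  imports "HOL-Probability.Probability"
begin

definition order_stat :: "nat \<Rightarrow> nat \<Rightarrow> (nat \<Rightarrow> real) \<Rightarrow> real" where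
  "order_stat n k \<omega> = sort (map \<omega> [0..<n]) ! (k - 1)"

definition pareto_cdf :: "real \<Rightarrow> real \<Rightarrow> real" where
  "pareto_cdf \<alpha> x = (if x \<ge> 1 then 1 - x powr (-\<alpha>) else 0)"

definition frechet_cdf :: "real \<Rightarrow> real \<Rightarrow> real" where
  "frechet_cdf \<alpha> x = (if x > 0 then exp (- 1 / x powr \<alpha>) else 0)"

end

theory Submission
  imports Defs
begin


lemma sorted_nth_le_iff:
  fixes ys :: "real list"
  assumes "sorted ys" "j < length ys"
  shows "ys ! j \<le> y \<longleftrightarrow> j < card {i. i < length ys \<and> ys ! i \<le> y}"
proof
  assume h: "ys ! j \<le> y"
  have "{0..j} \<subseteq> {i. i < length ys \<and> ys ! i \<le> y}"
    using assms h by (auto intro: order_trans[OF sorted_nth_mono])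
  from card_mono[OF _ this] show "j < card {i. i < length ys \<and> ys ! i \<le> y}" by simp
next
  assume h: "j < card {i. i < length ys \<and> ys ! i \<le> y}"
  show "ys ! j \<le> y"
  proof (rule ccontr)
    assume nj: "\<not> ys ! j \<le> y"
    have "{i. i < length ys \<and> ys ! i \<le> y} \<subseteq> {0..<j}"
    proof (rule subsetI)
      fix i assume "i \<in> {i. i < length ys \<and> ys ! i \<le> y}"
      hence i: "i < length ys" "ys ! i \<le> y" by auto
      show "i \<in> {0..<j}"
      proof (rule ccontr)
        assume "i \<notin> {0..<j}"
        hence "j \<le> i" by auto
        hence "ys ! j \<le> ys ! i" by (rule sorted_nth_mono[OF assms(1)]) (use i in auto)
        with i nj show False by linarith
      qed
    qed
    from card_mono[OF _ this] h show False by simp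
  qed
qed

lemma order_stat_le_iff:
  assumes "1 \<le> k" "k \<le> n"
  shows "order_stat n k \<omega> \<le> y \<longleftrightarrow> k \<le> card {i\<in>{..<n}. \<omega> i \<le> y}"
proof -
  define ys where "ys = sort (map \<omega> [0..<n])"
  have len: "length ys = n" by (simp add: ys_def)
  have "card {i. i < length ys \<and> ys ! i \<le> y} = length (filter (\<lambda>z. z \<le> y) ys)"
    by (simp add: length_filter_conv_card)
  also have "\<dots> = length (filter (\<lambda>z. z \<le> y) (map \<omega> [0..<n]))"
    unfolding ys_def by (metis mset_filter mset_sort size_mset)
  also have "\<dots> = card {i\<in>{..<n}. \<omega> i \<le> y}"
    by (simp add: length_filter_conv_card) (rule arg_cong[where f=card], auto)
  finally have c: "card {i. i < length ys \<and> ys ! i \<le> y} = card {i\<in>{..<n}. \<omega> i \<le> y}" .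
  have "order_stat n k \<omega> = ys ! (k - 1)" by (simp add: order_stat_def ys_def)
  moreover have "ys ! (k - 1) \<le> y \<longleftrightarrow> k - 1 < card {i. i < length ys \<and> ys ! i \<le> y}"
    by (rule sorted_nth_le_iff) (use assms len in \<open>auto simp: ys_def\<close>)
  moreover have "k - 1 < m \<longleftrightarrow> k \<le> m" for m using assms by arith
  ultimately show ?thesis using c by simp
qed

lemma order_stat_mono:
  assumes "1 \<le> k" "k \<le> n" "\<And>i. i < n \<Longrightarrow> \<omega>' i \<le> \<omega> i"
  shows "order_stat n k \<omega>' \<le> order_stat n k \<omega>"
proof -
  let ?y = "order_stat n k \<omega>"
  have "k \<le> card {i\<in>{..<n}. \<omega> i \<le> ?y}" using order_stat_le_iff[OF assms(1,2), of \<omega> ?y] by simp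
  also have "\<dots> \<le> card {i\<in>{..<n}. \<omega>' i \<le> ?y}"
    by (rule card_mono) (auto intro: order_trans[OF assms(3)])
  finally show ?thesis using order_stat_le_iff[OF assms(1,2), of \<omega>' ?y] by simp
qed

lemma order_stat_measurable:
  assumes "1 \<le> k" "k \<le> n"
  shows "order_stat n k \<in> borel_measurable (PiM {..<n} (\<lambda>_. (borel :: real measure)))"
  unfolding borel_measurable_iff_le
proof
  fix a :: real
  have eq0: "card {i\<in>{..<n}. \<omega> i \<le> a} = (\<Sum>i<n. if \<omega> i \<le> a then 1 else 0)" for \<omega> :: "nat \<Rightarrow> real"
    by (simp add: sum.If_cases) (rule arg_cong[where f=card], auto)
  have eq: "real (card {i\<in>{..<n}. \<omega> i \<le> a}) = (\<Sum>i<n. if \<omega> i \<le> a then 1 else 0 :: real)" for \<omega> :: "nat \<Rightarrow> real"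
    unfolding eq0 of_nat_sum by (rule sum.cong) auto
  have eq3: "order_stat n k \<omega> \<le> a \<longleftrightarrow> real k \<le> (\<Sum>i<n. if \<omega> i \<le> a then 1 else 0 :: real)" for \<omega>
    unfolding eq[symmetric] order_stat_le_iff[OF assms] by simp
  have "{w \<in> space (PiM {..<n} (\<lambda>_. (borel :: real measure))). order_stat n k w \<le> a}
      = {w \<in> space (PiM {..<n} (\<lambda>_. (borel :: real measure))). real k \<le> (\<Sum>i<n. if w i \<le> a then 1 else 0 :: real)}"
    using eq3 by blast
  also have "\<dots> \<in> sets (PiM {..<n} (\<lambda>_. (borel :: real measure)))"
    by measurable
  finally show "{w \<in> space (PiM {..<n} (\<lambda>_. (borel :: real measure))). order_stat n k w \<le> a} \<in> sets (PiM {..<n} (\<lambda>_. (borel :: real measure)))" .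
qed



lemma powr_neg_inv_le_iff:
  fixes a b \<beta> :: real
  assumes "a > 0" "b > 0" "\<beta> > 0"
  shows "a powr (-(1/\<beta>)) \<le> b \<longleftrightarrow> b powr (-\<beta>) \<le> a"
proof
  assume h: "a powr (-(1/\<beta>)) \<le> b"
  have "b powr (-\<beta>) \<le> (a powr (-(1/\<beta>))) powr (-\<beta>)"
    by (rule powr_mono2') (use assms h in auto)
  also have "\<dots> = a" using assms by (simp add: powr_powr)
  finally show "b powr (-\<beta>) \<le> a" .
next
  assume h: "b powr (-\<beta>) \<le> a"
  have "a powr (-(1/\<beta>)) \<le> (b powr (-\<beta>)) powr (-(1/\<beta>))"
    by (rule powr_mono2') (use assms h in auto)
  also have "\<dots> = b" using assms by (simp add: powr_powr)
  finally show "a powr (-(1/\<beta>)) \<le> b" .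
qed

lemma powr_neg_inv_ge_iff:
  fixes a b \<beta> :: real
  assumes "a > 0" "b > 0" "\<beta> > 0"
  shows "b \<le> a powr (-(1/\<beta>)) \<longleftrightarrow> a \<le> b powr (-\<beta>)"
proof
  assume h: "b \<le> a powr (-(1/\<beta>))"
  have "a = (a powr (-(1/\<beta>))) powr (-\<beta>)" using assms by (simp add: powr_powr)
  also have "\<dots> \<le> b powr (-\<beta>)"
    by (rule powr_mono2') (use assms h in auto)
  finally show "a \<le> b powr (-\<beta>)" .
next
  assume h: "a \<le> b powr (-\<beta>)"
  have "b = (b powr (-\<beta>)) powr (-(1/\<beta>))" using assms by (simp add: powr_powr)
  also have "\<dots> \<le> a powr (-(1/\<beta>))"
    by (rule powr_mono2') (use assms h in auto)
  finally show "b \<le> a powr (-(1/\<beta>))" .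
qed

definition gq :: "real \<Rightarrow> real \<Rightarrow> real" where
  "gq \<alpha> x = (if x > 1 then (- ln (1 - x powr (-\<alpha>))) powr (-1/\<alpha>) else min x 0)"

lemma gq_basic:
  fixes \<alpha> x :: real
  assumes "\<alpha> > 0" "x > 1"
  shows "x powr (-\<alpha>) > 0" "x powr (-\<alpha>) < 1" "- ln (1 - x powr (-\<alpha>)) > 0"
proof -
  show a: "x powr (-\<alpha>) > 0" using assms by auto
  show b: "x powr (-\<alpha>) < 1" using assms by (simp add: powr_less_one)
  show "- ln (1 - x powr (-\<alpha>)) > 0" using a b by simp
qed

lemma gq_pos: "\<alpha> > 0 \<Longrightarrow> x > 1 \<Longrightarrow> gq \<alpha> x > 0"
  using gq_basic[of \<alpha> x] by (simp add: gq_def)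

lemma gq_le_iff:
  assumes "\<alpha> > 0" "x > 1" "y > 0"
  shows "gq \<alpha> x \<le> y \<longleftrightarrow> x \<le> (1 - exp (- (y powr (-\<alpha>)))) powr (-1/\<alpha>)"
proof -
  define t where "t = x powr (-\<alpha>)"
  define s where "s = y powr (-\<alpha>)"
  have t: "0 < t" "t < 1" "- ln (1 - t) > 0" using gq_basic[OF assms(1,2)] by (auto simp: t_def)
  have s: "s > 0" using assms by (simp add: s_def)
  have r: "0 < 1 - exp (- s)" "1 - exp (-s) < 1" using s by auto
  have "gq \<alpha> x \<le> y \<longleftrightarrow> s \<le> - ln (1 - t)"
    unfolding gq_def s_def t_def using assms t
    by (simp add: powr_neg_inv_le_iff t_def)
  also have "\<dots> \<longleftrightarrow> ln (1 - t) \<le> ln (exp (- s))" unfolding ln_exp by linarith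
  also have "\<dots> \<longleftrightarrow> 1 - t \<le> exp (- s)"
    by (rule ln_le_cancel_iff) (use t in auto)
  also have "\<dots> \<longleftrightarrow> 1 - exp (-s) \<le> t" by linarith
  also have "\<dots> \<longleftrightarrow> x \<le> (1 - exp (-s)) powr (-1/\<alpha>)"
    unfolding t_def using powr_neg_inv_ge_iff[of "1 - exp (-s)" x \<alpha>] r assms by simp
  finally show ?thesis by (simp add: s_def)
qed

lemma gq_le: "\<alpha> > 0 \<Longrightarrow> gq \<alpha> x \<le> x"
proof (cases "x > 1")
  case True
  assume a: "\<alpha> > 0"
  have t: "0 < x powr (-\<alpha>)" "x powr (-\<alpha>) < 1" using gq_basic[OF a True] by auto
  have "ln (1 - x powr (-\<alpha>)) \<le> (1 - x powr (-\<alpha>)) - 1" using t by (intro ln_le_minus_one) auto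
  then have "x powr (-\<alpha>) \<le> - ln (1 - x powr (-\<alpha>))" by simp
  then show ?thesis using True a gq_basic[OF a True]
    by (simp add: gq_def powr_neg_inv_le_iff)
qed (simp add: gq_def)

lemma gq_mono: "\<alpha> > 0 \<Longrightarrow> mono (gq \<alpha>)"
proof (rule monoI)
  fix x y :: real assume a: "\<alpha> > 0" and xy: "x \<le> y"
  show "gq \<alpha> x \<le> gq \<alpha> y"
  proof (cases "y > 1")
    case False then show ?thesis using xy by (simp add: gq_def)
  next
    case True
    note yp = gq_pos[OF a True]
    show ?thesis
    proof (cases "x > 1")
      case False then show ?thesis using yp by (simp add: gq_def)
    next
      case True
      have "gq \<alpha> x \<le> gq \<alpha> y \<longleftrightarrow> x \<le> (1 - exp (- (gq \<alpha> y powr (-\<alpha>)))) powr (-1/\<alpha>)"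
        by (rule gq_le_iff[OF a True yp])
      moreover have "y \<le> (1 - exp (- (gq \<alpha> y powr (-\<alpha>)))) powr (-1/\<alpha>)"
        using gq_le_iff[OF a \<open>y > 1\<close> yp] by simp
      ultimately show ?thesis using xy by simp
    qed
  qed
qed


theorem lemma18:
  fixes \<alpha> :: real and n k :: nat and P F :: "real measure"
  assumes "\<alpha> > 1" and "n \<ge> 1" and "k \<in> {1..n}"
    and "real_distribution P" and "\<And>x. cdf P x = pareto_cdf \<alpha> x"
    and "real_distribution F" and "\<And>x. cdf F x = frechet_cdf \<alpha> x"
  shows "(\<integral>\<^sup>+ \<omega>. ennreal (order_stat n k \<omega>) \<partial>(PiM {..<n} (\<lambda>_. F)))
         \<le> (\<integral>\<^sup>+ \<omega>. ennreal (order_stat n k \<omega>) \<partial>(PiM {..<n} (\<lambda>_. P))) + 1"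
proof -
  interpret P: real_distribution P by fact
  interpret F: real_distribution F by fact
  have a0: "\<alpha> > 0" using assms(1) by simp
  have k1: "1 \<le> k" "k \<le> n" using assms(3) by auto
  define g where "g = gq \<alpha>"
  have gm: "g \<in> borel_measurable borel" unfolding g_def by (rule borel_measurable_mono[OF gq_mono[OF a0]])
  have gmF: "g \<in> measurable P F"
    using gm by (simp add: measurable_def P.events_eq_borel F.events_eq_borel P.space_eq_univ F.space_eq_univ)
  have gmP: "g \<in> borel_measurable P"
    using gm by (simp add: measurable_def P.events_eq_borel P.space_eq_univ)
  have P1: "measure P {..1} = 0" using assms(5)[of 1] by (simp add: cdf_def pareto_cdf_def)
  have D: "distr P borel g = F"
  proof (rule cdf_unique)
    show "real_distribution (distr P borel g)"
      unfolding real_distribution_def real_distribution_axioms_def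
      using P.prob_space_distr[OF gmP] by simp
    show "real_distribution F" by fact
    show "cdf (distr P borel g) = cdf F"
    proof
      fix y :: real
      have "cdf (distr P borel g) y = measure P {x. g x \<le> y}"
        unfolding cdf_def using gmP by (simp add: measure_distr vimage_def P.space_eq_univ)
      also have "\<dots> = cdf F y"
      proof (cases "y > 0")
        case True
        define r where "r = 1 - exp (- (y powr (-\<alpha>)))"
        define c where "c = r powr (-(1/\<alpha>))"
        have r: "0 < r" "r < 1" using True by (auto simp: r_def)
        have c1: "1 \<le> c" unfolding c_def using powr_neg_inv_ge_iff[of r 1 \<alpha>] r a0 by simp
        have "{x. g x \<le> y} = {..c}"
        proof (intro set_eqI iffI)
          fix x assume "x \<in> {x. g x \<le> y}"
          then show "x \<in> {..c}"
            using gq_le_iff[OF a0 _ True, of x] c1 by (cases "x > 1") (auto simp: g_def c_def r_def)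
        next
          fix x assume "x \<in> {..c}"
          then show "x \<in> {x. g x \<le> y}"
            using gq_le_iff[OF a0 _ True, of x] True by (cases "x > 1") (auto simp: g_def c_def r_def gq_def)
        qed
        then have "measure P {x. g x \<le> y} = cdf P c" by (simp add: cdf_def)
        also have "\<dots> = 1 - c powr (-\<alpha>)" using c1 by (simp add: assms(5) pareto_cdf_def)
        also have "c powr (-\<alpha>) = r" unfolding c_def using r a0 by (simp add: powr_powr)
        also have "1 - r = exp (- 1 / y powr \<alpha>)" unfolding r_def by (simp add: powr_minus divide_inverse)
        finally show ?thesis using True by (simp add: assms(7) frechet_cdf_def)
      next
        case False
        have "{x. g x \<le> y} \<subseteq> {..1}"
          using False gq_pos[OF a0] by (auto simp: g_def) (meson le_less_trans not_le)
        then have "measure P {x. g x \<le> y} \<le> measure P {..1}"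
          by (intro P.finite_measure_mono) (auto simp: P.events_eq_borel)
        then have "measure P {x. g x \<le> y} = 0" using P1 by (simp add: measure_nonneg antisym)
        then show ?thesis using False by (simp add: assms(7) frechet_cdf_def)
      qed
      finally show "cdf (distr P borel g) y = cdf F y" .
    qed
  qed
  have DF: "distr P F g = F"
    using D distr_cong[of P P F borel g g] by (simp add: F.events_eq_borel)
  have PF: "PiM {..<n} (\<lambda>_. F) = distr (PiM {..<n} (\<lambda>_. P)) (PiM {..<n} (\<lambda>_. F)) (compose {..<n} g)"
    using distr_PiM_finite_prob_space'[of "{..<n}" "\<lambda>_. P" "\<lambda>_. F" g] gmF DF
    by (simp add: P.prob_space_axioms F.prob_space_axioms)
  have Tm: "compose {..<n} g \<in> measurable (PiM {..<n} (\<lambda>_. P)) (PiM {..<n} (\<lambda>_. F))"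
    unfolding compose_def
  proof (rule measurable_restrict)
    fix i assume i: "i \<in> {..<n}"
    have "(\<lambda>x. x i) \<in> measurable (PiM {..<n} (\<lambda>_. P)) P"
      using measurable_component_singleton[OF i, of "\<lambda>_. P"] by simp
    from measurable_compose[OF this gmF] show "(\<lambda>x. g (x i)) \<in> measurable (PiM {..<n} (\<lambda>_. P)) F" .
  qed
  have setsF: "sets (PiM {..<n} (\<lambda>_. F)) = sets (PiM {..<n} (\<lambda>_. (borel :: real measure)))"
    by (rule sets_PiM_cong) (auto simp: F.events_eq_borel)
  have fm: "(\<lambda>\<omega>. ennreal (order_stat n k \<omega>)) \<in> borel_measurable (distr (PiM {..<n} (\<lambda>_. P)) (PiM {..<n} (\<lambda>_. F)) (compose {..<n} g))"
  proof -
    have "(\<lambda>\<omega>. ennreal (order_stat n k \<omega>)) \<in> borel_measurable (PiM {..<n} (\<lambda>_. (borel :: real measure)))"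
      using order_stat_measurable[OF k1] by measurable
    then show ?thesis
      by (subst measurable_cong_sets[OF _ refl]) (auto simp: setsF)
  qed
  have "(\<integral>\<^sup>+ \<omega>. ennreal (order_stat n k \<omega>) \<partial>(PiM {..<n} (\<lambda>_. F)))
      = (\<integral>\<^sup>+ \<omega>. ennreal (order_stat n k (compose {..<n} g \<omega>)) \<partial>(PiM {..<n} (\<lambda>_. P)))"
    by (subst PF) (rule nn_integral_distr[OF Tm fm])
  also have "\<dots> \<le> (\<integral>\<^sup>+ \<omega>. ennreal (order_stat n k \<omega>) \<partial>(PiM {..<n} (\<lambda>_. P)))"
  proof (rule nn_integral_mono)
    fix \<omega> :: "nat \<Rightarrow> real"
    have "order_stat n k (compose {..<n} g \<omega>) \<le> order_stat n k \<omega>"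
      by (rule order_stat_mono[OF k1]) (simp add: compose_eq g_def gq_le[OF a0])
    then show "ennreal (order_stat n k (compose {..<n} g \<omega>)) \<le> ennreal (order_stat n k \<omega>)"
      by (rule ennreal_leI)
  qed
  also have "\<dots> \<le> (\<integral>\<^sup>+ \<omega>. ennreal (order_stat n k \<omega>) \<partial>(PiM {..<n} (\<lambda>_. P))) + 1"
    by simp
  finally show ?thesis .
qed

end
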